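(* Let $\mathcal{T}$ be a countable directed poset, $X:\mathcal{T}\to\mathbf{Set}_*$ a diagram of pointed sets satisfying the Mittag-Leffler condition, and $A$ an abelian group. Then: (1) If $A$ is $p$-divisible for a prime $p$, then $G(X,A)$ and $H(X,A)$ are $p$-divisible. (2) If $A$ is divisible, then $G(X,A)$ and $H(X,A)$ are divisible. (3) If $A$ is almost divisible, then $G(X,A)$ and $H(X,A)$ are almost divisible.
   Context: A directed poset is regarded as a category with a single morphism $t\to s$ whenever $t\ge s$. For a pointed set $Y$, $Y\wedge A:=\bigoplus_{Y\setminus\{*\}}A$ (finitely supported pointed maps $Y\to A$), functorial via $f_*(sv)=f(s)v$, where $sv$ is the element with value $v$ at $s$ ($*v=0$). $G(X,A):=\lim_\mathcal{T}(X\wedge A)$; $K(X,A)$ is the image of the injective natural map $\rho:(\lim_\mathcal{T}X)\wedge A\to G(X,A)$, $\rho(xv)(t)=x(t)v$; $H(X,A):=G(X,A)/K(X,A)$. $X$ satisfies the Mittag-Leffler condition if for every $t$ there is $s\ge t$ with $\mathrm{Im}(X(s)\to X(t))=\mathrm{Im}(X(r)\to X(t))$ for all $r\ge s$. An abelian group is almost divisible iff it is the direct sum of a divisible group and a bounded group (equivalently, $l_p(A)=0$ for almost all primes $p$ and $l_p(A)<\omega$ for all primes $p$, where $l_p$ is the $p$-length). *)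

theory Defs
  imports "HOL-Algebra.Algebra" "HOL-Computational_Algebra.Primes"
begin

definition n_divisible :: "('g, 'b) monoid_scheme \<Rightarrow> nat \<Rightarrow> bool" where
  "n_divisible G n \<longleftrightarrow> (\<forall>x\<in>carrier G. \<exists>y\<in>carrier G. y [^]\<^bsub>G\<^esub> n = x)"

definition divisible_grp :: "('g, 'b) monoid_scheme \<Rightarrow> bool" where
  "divisible_grp G \<longleftrightarrow> (\<forall>n::nat. n > 0 \<longrightarrow> n_divisible G n)"

definition bounded_grp :: "('g, 'b) monoid_scheme \<Rightarrow> bool" where
  "bounded_grp G \<longleftrightarrow> (\<exists>n::nat. n > 0 \<and> (\<forall>x\<in>carrier G. x [^]\<^bsub>G\<^esub> n = \<one>\<^bsub>G\<^esub>))"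

definition almost_divisible :: "('g, 'b) monoid_scheme \<Rightarrow> bool" where
  "almost_divisible G \<longleftrightarrow>
     (\<exists>D B. subgroup D G \<and> subgroup B G \<and>
        divisible_grp (G\<lparr>carrier := D\<rparr>) \<and> bounded_grp (G\<lparr>carrier := B\<rparr>) \<and>
        D \<inter> B = {\<one>\<^bsub>G\<^esub>} \<and> D <#>\<^bsub>G\<^esub> B = carrier G)"

text \<open>Elements of Y \<and> A (Y pointed with base point y0): finitely supported maps
  Y \<rightarrow> A, vanishing at y0 and outside Y.\<close>
definition wedge :: "('a, 'c) monoid_scheme \<Rightarrow> 'y set \<Rightarrow> 'y \<Rightarrow> ('y \<Rightarrow> 'a) set" where
  "wedge A Y y0 = {u. (\<forall>y. u y \<in> carrier A) \<and> (\<forall>y. (y \<notin> Y \<or> y = y0) \<longrightarrow> u y = \<one>\<^bsub>A\<^esub>)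
                      \<and> finite {y. u y \<noteq> \<one>\<^bsub>A\<^esub>}}"

text \<open>Induced map f_*: Y \<and> A \<rightarrow> Z \<and> A, f_*(s v) = f(s) v, extended additively.\<close>
definition push :: "('a, 'c) monoid_scheme \<Rightarrow> 'y set \<Rightarrow> 'y \<Rightarrow> 'z set \<Rightarrow> 'z \<Rightarrow> ('y \<Rightarrow> 'z)
                     \<Rightarrow> ('y \<Rightarrow> 'a) \<Rightarrow> ('z \<Rightarrow> 'a)" where
  "push A Y y0 Z z0 f u = (\<lambda>z. if z \<in> Z \<and> z \<noteq> z0
       then finprod A u {y. y \<in> Y \<and> y \<noteq> y0 \<and> f y = z \<and> u y \<noteq> \<one>\<^bsub>A\<^esub>}
       else \<one>\<^bsub>A\<^esub>)"

text \<open>The poset is the type 't with its order; the morphism t \<rightarrow> s exists iff s \<le> t.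
  X t is the pointed set at t with base point bp t; F t s : X t \<rightarrow> X s for s \<le> t.\<close>
definition pointed_diagram :: "('t::order \<Rightarrow> 'x set) \<Rightarrow> ('t \<Rightarrow> 'x) \<Rightarrow> ('t \<Rightarrow> 't \<Rightarrow> 'x \<Rightarrow> 'x) \<Rightarrow> bool" where
  "pointed_diagram D bp F \<longleftrightarrow>
     (\<forall>t. bp t \<in> D t) \<and>
     (\<forall>t s. s \<le> t \<longrightarrow> F t s ` D t \<subseteq> D s \<and> F t s (bp t) = bp s) \<and>
     (\<forall>t. \<forall>x\<in>D t. F t t x = x) \<and>
     (\<forall>t s r. r \<le> s \<and> s \<le> t \<longrightarrow> (\<forall>x\<in>D t. F s r (F t s x) = F t r x))"

definition directed_poset :: "'t::order itself \<Rightarrow> bool" where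
  "directed_poset _ \<longleftrightarrow> (\<forall>s t::'t. \<exists>u. s \<le> u \<and> t \<le> u)"

definition mittag_leffler :: "('t::order \<Rightarrow> 'x set) \<Rightarrow> ('t \<Rightarrow> 't \<Rightarrow> 'x \<Rightarrow> 'x) \<Rightarrow> bool" where
  "mittag_leffler D F \<longleftrightarrow>
     (\<forall>t. \<exists>s. t \<le> s \<and> (\<forall>r. s \<le> r \<longrightarrow> F s t ` D s = F r t ` D r))"

definition limX :: "('t::order \<Rightarrow> 'x set) \<Rightarrow> ('t \<Rightarrow> 't \<Rightarrow> 'x \<Rightarrow> 'x) \<Rightarrow> ('t \<Rightarrow> 'x) set" where
  "limX D F = {x. (\<forall>t. x t \<in> D t) \<and> (\<forall>t s. s \<le> t \<longrightarrow> F t s (x t) = x s)}"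

definition G_carrier :: "('t::order \<Rightarrow> 'x set) \<Rightarrow> ('t \<Rightarrow> 'x) \<Rightarrow> ('t \<Rightarrow> 't \<Rightarrow> 'x \<Rightarrow> 'x)
                          \<Rightarrow> ('a, 'c) monoid_scheme \<Rightarrow> ('t \<Rightarrow> 'x \<Rightarrow> 'a) set" where
  "G_carrier D bp F A = {g. (\<forall>t. g t \<in> wedge A (D t) (bp t)) \<and>
      (\<forall>t s. s \<le> t \<longrightarrow> push A (D t) (bp t) (D s) (bp s) (F t s) (g t) = g s)}"

definition G_grp :: "('t::order \<Rightarrow> 'x set) \<Rightarrow> ('t \<Rightarrow> 'x) \<Rightarrow> ('t \<Rightarrow> 't \<Rightarrow> 'x \<Rightarrow> 'x)
                      \<Rightarrow> ('a, 'c) monoid_scheme \<Rightarrow> ('t \<Rightarrow> 'x \<Rightarrow> 'a) monoid" where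
  "G_grp D bp F A = \<lparr>carrier = G_carrier D bp F A,
      Group.monoid.mult = (\<lambda>g h t x. g t x \<otimes>\<^bsub>A\<^esub> h t x),
      one = (\<lambda>t x. \<one>\<^bsub>A\<^esub>)\<rparr>"

text \<open>rho : (lim X) \<and> A \<rightarrow> G(X,A), rho(x v)(t) = x(t) v, i.e. rho(u)(t) = (ev_t)_*(u).\<close>
definition rho :: "('t::order \<Rightarrow> 'x set) \<Rightarrow> ('t \<Rightarrow> 'x) \<Rightarrow> ('t \<Rightarrow> 't \<Rightarrow> 'x \<Rightarrow> 'x)
                   \<Rightarrow> ('a, 'c) monoid_scheme \<Rightarrow> (('t \<Rightarrow> 'x) \<Rightarrow> 'a) \<Rightarrow> ('t \<Rightarrow> 'x \<Rightarrow> 'a)" where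
  "rho D bp F A u = (\<lambda>t. push A (limX D F) bp (D t) (bp t) (\<lambda>x. x t) u)"

definition K_set :: "('t::order \<Rightarrow> 'x set) \<Rightarrow> ('t \<Rightarrow> 'x) \<Rightarrow> ('t \<Rightarrow> 't \<Rightarrow> 'x \<Rightarrow> 'x)
                     \<Rightarrow> ('a, 'c) monoid_scheme \<Rightarrow> ('t \<Rightarrow> 'x \<Rightarrow> 'a) set" where
  "K_set D bp F A = rho D bp F A ` wedge A (limX D F) bp"

definition H_grp :: "('t::order \<Rightarrow> 'x set) \<Rightarrow> ('t \<Rightarrow> 'x) \<Rightarrow> ('t \<Rightarrow> 't \<Rightarrow> 'x \<Rightarrow> 'x)
                      \<Rightarrow> ('a, 'c) monoid_scheme \<Rightarrow> ('t \<Rightarrow> 'x \<Rightarrow> 'a) set monoid" where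
  "H_grp D bp F A = G_grp D bp F A Mod K_set D bp F A"

end

theory Submission
  imports Defs
begin

context comm_group
begin

lemma finprod_in_subgroup:
  assumes "subgroup S G" "\<And>i. i \<in> I \<Longrightarrow> f i \<in> S"
  shows "finprod G f I \<in> S"
  using assms(2)
proof (induct I rule: infinite_finite_induct)
  case (infinite A) then show ?case using assms(1) by (simp add: subgroup.one_closed)
next
  case empty then show ?case using assms(1) by (simp add: subgroup.one_closed)
next
  case (insert a A)
  have sub: "S \<subseteq> carrier G" using assms(1) subgroup.subset by blast
  have "f \<in> A \<rightarrow> carrier G" "f a \<in> carrier G" using insert sub by auto
  then have "finprod G f (insert a A) = f a \<otimes> finprod G f A" using insert by simp
  then show ?case using insert assms(1) by (simp add: subgroup.m_closed)
qed

lemma finprod_map: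
  assumes "\<And>a b. a \<in> carrier G \<Longrightarrow> b \<in> carrier G \<Longrightarrow> \<phi> (a \<otimes> b) = \<phi> a \<otimes> \<phi> b"
    and "\<phi> \<one> = \<one>" and "\<And>a. a \<in> carrier G \<Longrightarrow> \<phi> a \<in> carrier G"
    and "\<And>i. i \<in> I \<Longrightarrow> f i \<in> carrier G"
  shows "\<phi> (finprod G f I) = finprod G (\<lambda>i. \<phi> (f i)) I"
  using assms(4)
proof (induct I rule: infinite_finite_induct)
  case (infinite A) then show ?case using assms by simp
next
  case empty then show ?case using assms by simp
next
  case (insert a A)
  have "f \<in> A \<rightarrow> carrier G" "f a \<in> carrier G" using insert by auto
  moreover have "(\<lambda>i. \<phi> (f i)) \<in> A \<rightarrow> carrier G" "\<phi> (f a) \<in> carrier G" using insert assms(3) by auto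
  ultimately show ?case using insert assms(1) by simp
qed

lemma wedgeD:
  assumes "u \<in> wedge G Y y0"
  shows "\<And>y. u y \<in> carrier G" "\<And>y. y \<notin> Y \<Longrightarrow> u y = \<one>" "u y0 = \<one>"
    "finite {y. u y \<noteq> \<one>}" "{y. u y \<noteq> \<one>} \<subseteq> Y - {y0}"
  using assms unfolding wedge_def by auto

lemma push_eq:
  assumes u: "u \<in> wedge G Y y0" and S: "finite S" "{y. u y \<noteq> \<one>} \<subseteq> S"
  shows "push G Y y0 Z z0 f u z = (if z \<in> Z \<and> z \<noteq> z0 then finprod G u {y\<in>S. f y = z} else \<one>)"
proof (cases "z \<in> Z \<and> z \<noteq> z0")
  case True
  have "finprod G u {y. y \<in> Y \<and> y \<noteq> y0 \<and> f y = z \<and> u y \<noteq> \<one>} = finprod G u {y\<in>S. f y = z}"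
    apply (rule finprod_mono_neutral_cong_left)
    using S wedgeD[OF u] by auto
  then show ?thesis using True unfolding push_def by simp
next
  case False then show ?thesis unfolding push_def by auto
qed

lemma push_supp:
  assumes u: "u \<in> wedge G Y y0"
  shows "{z. push G Y y0 Z z0 f u z \<noteq> \<one>} \<subseteq> f ` {y. u y \<noteq> \<one>}"
proof
  fix z assume "z \<in> {z. push G Y y0 Z z0 f u z \<noteq> \<one>}"
  then have ne: "push G Y y0 Z z0 f u z \<noteq> \<one>" by simp
  have "{y\<in>{y. u y \<noteq> \<one>}. f y = z} \<noteq> {}"
  proof
    assume e: "{y\<in>{y. u y \<noteq> \<one>}. f y = z} = {}"
    have "finprod G u {} = \<one>" by (rule finprod_empty)
    then show False using ne push_eq[OF u wedgeD(4)[OF u] order_refl, of Z z0 f z] unfolding e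
      by (simp split: if_splits)
  qed
  then show "z \<in> f ` {y. u y \<noteq> \<one>}" by auto
qed

lemma push_wedge:
  assumes u: "u \<in> wedge G Y y0"
  shows "push G Y y0 Z z0 f u \<in> wedge G Z z0"
proof -
  have fin: "finite {z. push G Y y0 Z z0 f u z \<noteq> \<one>}"
    by (rule finite_surj[OF wedgeD(4)[OF u] push_supp[OF u]])
  have c: "push G Y y0 Z z0 f u z \<in> carrier G" for z
  proof -
    have "u \<in> {y. y \<in> Y \<and> y \<noteq> y0 \<and> f y = z \<and> u y \<noteq> \<one>} \<rightarrow> carrier G"
      using wedgeD(1)[OF u] by blast
    then show ?thesis unfolding push_def by simp
  qed
  have o: "push G Y y0 Z z0 f u z = \<one>" if "z \<notin> Z \<or> z = z0" for z
    using that unfolding push_def by auto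
  show ?thesis unfolding wedge_def mem_Collect_eq using fin c o by blast
qed

lemma push_map:
  assumes u: "u \<in> wedge G Y y0"
    and "\<And>a b. a \<in> carrier G \<Longrightarrow> b \<in> carrier G \<Longrightarrow> \<phi> (a \<otimes> b) = \<phi> a \<otimes> \<phi> b"
    and "\<phi> \<one> = \<one>" and "\<And>a. a \<in> carrier G \<Longrightarrow> \<phi> a \<in> carrier G"
  shows "(\<lambda>y. \<phi> (u y)) \<in> wedge G Y y0"
    and "push G Y y0 Z z0 f (\<lambda>y. \<phi> (u y)) = (\<lambda>z. \<phi> (push G Y y0 Z z0 f u z))"
proof -
  have fin: "finite {y. \<phi> (u y) \<noteq> \<one>}"
    by (rule finite_subset[OF _ wedgeD(4)[OF u]]) (auto simp: assms(3))
  show w: "(\<lambda>y. \<phi> (u y)) \<in> wedge G Y y0"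
    using wedgeD[OF u] fin assms(3,4) unfolding wedge_def by auto
  show "push G Y y0 Z z0 f (\<lambda>y. \<phi> (u y)) = (\<lambda>z. \<phi> (push G Y y0 Z z0 f u z))"
  proof
    fix z
    have s: "{y. \<phi> (u y) \<noteq> \<one>} \<subseteq> {y. u y \<noteq> \<one>}" using assms(3) by auto
    show "push G Y y0 Z z0 f (\<lambda>y. \<phi> (u y)) z = \<phi> (push G Y y0 Z z0 f u z)"
      using push_eq[OF w wedgeD(4)[OF u] s, of Z z0 f z] push_eq[OF u wedgeD(4)[OF u] order_refl, of Z z0 f z]
        finprod_map[OF assms(2-4), of "{y\<in>{y. u y \<noteq> \<one>}. f y = z}" u] wedgeD(1)[OF u] assms(3)
      by simp
  qed
qed

lemma push_mult:
  assumes u: "u \<in> wedge G Y y0" and v: "v \<in> wedge G Y y0"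
  shows "(\<lambda>y. u y \<otimes> v y) \<in> wedge G Y y0"
    and "push G Y y0 Z z0 f (\<lambda>y. u y \<otimes> v y) = (\<lambda>z. push G Y y0 Z z0 f u z \<otimes> push G Y y0 Z z0 f v z)"
proof -
  let ?S = "{y. u y \<noteq> \<one>} \<union> {y. v y \<noteq> \<one>}"
  have finS: "finite ?S" using wedgeD(4)[OF u] wedgeD(4)[OF v] by simp
  have s: "{y. u y \<otimes> v y \<noteq> \<one>} \<subseteq> ?S" by auto
  show w: "(\<lambda>y. u y \<otimes> v y) \<in> wedge G Y y0"
    using wedgeD[OF u] wedgeD[OF v] finite_subset[OF s finS] unfolding wedge_def by auto
  show "push G Y y0 Z z0 f (\<lambda>y. u y \<otimes> v y) = (\<lambda>z. push G Y y0 Z z0 f u z \<otimes> push G Y y0 Z z0 f v z)"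
  proof
    fix z
    have uc: "u \<in> {y\<in>?S. f y = z} \<rightarrow> carrier G" "v \<in> {y\<in>?S. f y = z} \<rightarrow> carrier G"
      using wedgeD(1)[OF u] wedgeD(1)[OF v] by blast+
    show "push G Y y0 Z z0 f (\<lambda>y. u y \<otimes> v y) z = push G Y y0 Z z0 f u z \<otimes> push G Y y0 Z z0 f v z"
      unfolding push_eq[OF w finS s, of Z z0 f z] push_eq[OF u finS Un_upper1, of Z z0 f z] push_eq[OF v finS Un_upper2, of Z z0 f z]
      using finprod_multf[OF uc] by simp
  qed
qed

lemma push_cong:
  assumes "\<And>y. y \<in> Y \<Longrightarrow> f y = f' y"
  shows "push G Y y0 Z z0 f u = push G Y y0 Z z0 f' u"
proof -
  have "\<And>z. {y. y \<in> Y \<and> y \<noteq> y0 \<and> f y = z \<and> u y \<noteq> \<one>} = {y. y \<in> Y \<and> y \<noteq> y0 \<and> f' y = z \<and> u y \<noteq> \<one>}"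
    using assms by auto
  then show ?thesis
    unfolding push_def by (intro ext if_cong[OF refl _ refl] arg_cong[where f="finprod G u"]) simp
qed

lemma push_id:
  assumes u: "u \<in> wedge G Y y0"
  shows "push G Y y0 Y y0 (\<lambda>y. y) u = u"
proof
  fix z
  have "{y \<in> {y. u y \<noteq> \<one>}. y = z} = (if u z \<noteq> \<one> then {z} else {})" by auto
  then show "push G Y y0 Y y0 (\<lambda>y. y) u z = u z"
    using push_eq[OF u wedgeD(4)[OF u] order_refl, of Y y0 "\<lambda>y. y" z] wedgeD[OF u]
    by auto
qed

lemma push_comp:
  assumes u: "u \<in> wedge G Y y0" and f: "f ` Y \<subseteq> Z" "f y0 = z0" and g: "g z0 = w0"
  shows "push G Z z0 W w0 g (push G Y y0 Z z0 f u) = push G Y y0 W w0 (\<lambda>y. g (f y)) u"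
proof
  fix w
  let ?S = "{y. u y \<noteq> \<one>}"
  have finS: "finite ?S" using wedgeD(4)[OF u] .
  have pw: "push G Y y0 Z z0 f u \<in> wedge G Z z0" by (rule push_wedge[OF u])
  have ps: "{z. push G Y y0 Z z0 f u z \<noteq> \<one>} \<subseteq> f ` ?S" by (rule push_supp[OF u])
  show "push G Z z0 W w0 g (push G Y y0 Z z0 f u) w = push G Y y0 W w0 (\<lambda>y. g (f y)) u w"
  proof (cases "w \<in> W \<and> w \<noteq> w0")
    case False
    then show ?thesis unfolding push_def by auto
  next
    case True
    have L: "push G Z z0 W w0 g (push G Y y0 Z z0 f u) w
        = finprod G (push G Y y0 Z z0 f u) {z \<in> f ` ?S. g z = w}"
      using push_eq[OF pw finite_imageI[OF finS] ps, of W w0 g w] True by simp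
    have R: "push G Y y0 W w0 (\<lambda>y. g (f y)) u w = finprod G u {y\<in>?S. g (f y) = w}"
      using push_eq[OF u finS order_refl, of W w0 "\<lambda>y. g (f y)" w] True by simp
    have "finprod G (push G Y y0 Z z0 f u) {z \<in> f ` ?S. g z = w}
        = finprod G (\<lambda>z. finprod G u {y\<in>?S. f y = z}) {z \<in> f ` ?S. g z = w}"
    proof (rule finprod_cong')
      show "(\<lambda>z. finprod G u {y\<in>?S. f y = z}) \<in> {z \<in> f ` ?S. g z = w} \<rightarrow> carrier G"
        using wedgeD(1)[OF u] by (auto intro!: finprod_closed)
      fix z assume z: "z \<in> {z \<in> f ` ?S. g z = w}"
      then obtain y where y: "y \<in> ?S" "z = f y" by auto
      have "y \<in> Y" using y wedgeD(5)[OF u] by auto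
      then have "z \<in> Z" using f y by auto
      moreover have "z \<noteq> z0" using z g True by auto
      ultimately show "push G Y y0 Z z0 f u z = finprod G u {y\<in>?S. f y = z}"
        using push_eq[OF u finS order_refl, of Z z0 f z] by simp
    qed simp
    also have "\<dots> = finprod G u (\<Union>z\<in>{z \<in> f ` ?S. g z = w}. {y\<in>?S. f y = z})"
    proof (rule finprod_UN_disjoint[symmetric])
      show "finite {z \<in> f ` ?S. g z = w}" using finS by simp
      show "\<And>i. i \<in> {z \<in> f ` ?S. g z = w} \<Longrightarrow> finite {y\<in>?S. f y = i}" using finS by simp
      show "pairwise (\<lambda>i j. disjnt {y\<in>?S. f y = i} {y\<in>?S. f y = j}) {z \<in> f ` ?S. g z = w}"
        unfolding pairwise_def disjnt_def by blast
      show "\<And>i x. i \<in> {z \<in> f ` ?S. g z = w} \<Longrightarrow> x \<in> {y\<in>?S. f y = i} \<Longrightarrow> u x \<in> carrier G"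
        using wedgeD(1)[OF u] by blast
    qed
    also have "(\<Union>z\<in>{z \<in> f ` ?S. g z = w}. {y\<in>?S. f y = z}) = {y\<in>?S. g (f y) = w}" by auto
    finally show ?thesis using L R by simp
  qed
qed

end


locale setting = comm_group A for A :: "('a, 'c) monoid_scheme" (structure) +
  fixes D :: "'t::order \<Rightarrow> 'x set" and bp :: "'t \<Rightarrow> 'x" and F :: "'t \<Rightarrow> 't \<Rightarrow> 'x \<Rightarrow> 'x"
  assumes pd: "pointed_diagram D bp F"
begin

abbreviation "pushF t s u \<equiv> push A (D t) (bp t) (D s) (bp s) (F t s) u"
abbreviation "W t \<equiv> wedge A (D t) (bp t)"
abbreviation "Gc \<equiv> G_carrier D bp F A"
abbreviation "GG \<equiv> G_grp D bp F A"

lemma bp_in: "bp t \<in> D t" using pd unfolding pointed_diagram_def by auto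
lemma F_maps: "s \<le> t \<Longrightarrow> x \<in> D t \<Longrightarrow> F t s x \<in> D s" using pd unfolding pointed_diagram_def by blast
lemma F_bp: "s \<le> t \<Longrightarrow> F t s (bp t) = bp s" using pd unfolding pointed_diagram_def by auto
lemma F_id: "x \<in> D t \<Longrightarrow> F t t x = x" using pd unfolding pointed_diagram_def by auto
lemma F_comp: "r \<le> s \<Longrightarrow> s \<le> t \<Longrightarrow> x \<in> D t \<Longrightarrow> F s r (F t s x) = F t r x"
  using pd unfolding pointed_diagram_def by blast

lemma pushF_comp:
  assumes "r \<le> s" "s \<le> t" "u \<in> W t"
  shows "pushF s r (pushF t s u) = pushF t r u"
proof -
  have "pushF s r (pushF t s u) = push A (D t) (bp t) (D r) (bp r) (\<lambda>y. F s r (F t s y)) u"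
    by (rule push_comp) (use assms F_maps F_bp in auto)
  also have "\<dots> = pushF t r u"
    by (rule push_cong) (use assms F_comp in auto)
  finally show ?thesis .
qed

lemma pushF_id:
  assumes "u \<in> W t"
  shows "pushF t t u = u"
proof -
  have "pushF t t u = push A (D t) (bp t) (D t) (bp t) (\<lambda>y. y) u"
    by (rule push_cong) (use F_id in auto)
  then show ?thesis using push_id[OF assms] by simp
qed

lemma Gc_iff: "g \<in> Gc \<longleftrightarrow> (\<forall>t. g t \<in> W t) \<and> (\<forall>t s. s \<le> t \<longrightarrow> pushF t s (g t) = g s)"
  unfolding G_carrier_def by simp

lemma GG_simps: "carrier GG = Gc" "monoid.mult GG = (\<lambda>g h t x. g t x \<otimes> h t x)" "monoid.one GG = (\<lambda>t x. \<one>)"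
  unfolding G_grp_def by simp_all

lemma GG_pow: "g [^]\<^bsub>GG\<^esub> (n::nat) = (\<lambda>t x. g t x [^] n)"
  by (induct n) (simp_all add: GG_simps)

lemma one_wedge: "(\<lambda>y. \<one>) \<in> wedge A Y y0"
  unfolding wedge_def by simp

lemma push_one: "push A Y y0 Z z0 f (\<lambda>y. \<one>) = (\<lambda>z. \<one>)"
  unfolding push_def apply (rule ext) apply (simp only: simp_thms finprod_one) by simp

lemma push_inv:
  assumes "u \<in> wedge A Y y0"
  shows "(\<lambda>y. inv (u y)) \<in> wedge A Y y0"
    "push A Y y0 Z z0 f (\<lambda>y. inv (u y)) = (\<lambda>z. inv (push A Y y0 Z z0 f u z))"
  using push_map[OF assms, of "\<lambda>a. inv a"] by (simp_all add: inv_mult)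

lemma push_pow:
  assumes "u \<in> wedge A Y y0"
  shows "(\<lambda>y. u y [^] (n::nat)) \<in> wedge A Y y0"
    "push A Y y0 Z z0 f (\<lambda>y. u y [^] n) = (\<lambda>z. push A Y y0 Z z0 f u z [^] n)"
  using push_map[OF assms, of "\<lambda>a. a [^] n"] by (simp_all add: nat_pow_distrib)

lemma push_sub:
  assumes "subgroup S A" "u \<in> wedge A Y y0" "\<And>y. u y \<in> S"
  shows "push A Y y0 Z z0 f u z \<in> S"
proof -
  have "finprod A u I \<in> S" for I by (rule finprod_in_subgroup[OF assms(1)]) (use assms(3) in auto)
  then show ?thesis unfolding push_def using subgroup.one_closed[OF assms(1)] by auto
qed

lemma Gc_wedge: "g \<in> Gc \<Longrightarrow> g t \<in> W t" unfolding Gc_iff by blast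
lemma Gc_compat: "g \<in> Gc \<Longrightarrow> s \<le> t \<Longrightarrow> pushF t s (g t) = g s" unfolding Gc_iff by blast
lemma Gc_carr: "g \<in> Gc \<Longrightarrow> g t x \<in> carrier A" by (rule wedgeD(1)[OF Gc_wedge])

lemma Gc_mult:
  assumes g: "g \<in> Gc" and h: "h \<in> Gc"
  shows "(\<lambda>t x. g t x \<otimes> h t x) \<in> Gc"
  unfolding Gc_iff
proof (intro conjI allI impI)
  fix t show "(\<lambda>x. g t x \<otimes> h t x) \<in> W t" by (rule push_mult(1)[OF Gc_wedge[OF g] Gc_wedge[OF h]])
next
  fix t s :: 't assume st: "s \<le> t"
  show "pushF t s (\<lambda>x. g t x \<otimes> h t x) = (\<lambda>x. g s x \<otimes> h s x)"
    unfolding push_mult(2)[OF Gc_wedge[OF g] Gc_wedge[OF h]] Gc_compat[OF g st] Gc_compat[OF h st] ..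
qed

lemma Gc_inv:
  assumes g: "g \<in> Gc"
  shows "(\<lambda>t x. inv (g t x)) \<in> Gc"
  unfolding Gc_iff
proof (intro conjI allI impI)
  fix t show "(\<lambda>x. inv (g t x)) \<in> W t" by (rule push_inv(1)[OF Gc_wedge[OF g]])
next
  fix t s :: 't assume st: "s \<le> t"
  show "pushF t s (\<lambda>x. inv (g t x)) = (\<lambda>x. inv (g s x))"
    unfolding push_inv(2)[OF Gc_wedge[OF g]] Gc_compat[OF g st] ..
qed

lemma Gc_one: "(\<lambda>t x. \<one>) \<in> Gc"
  unfolding Gc_iff
proof (intro conjI allI impI)
  fix t show "(\<lambda>x. \<one>) \<in> W t" by (rule one_wedge)
next
  fix t s :: 't
  show "pushF t s (\<lambda>x. \<one>) = (\<lambda>x. \<one>)" by (rule push_one)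
qed

lemma GG_comm_group: "comm_group GG"
proof (rule comm_groupI, unfold GG_simps)
  show "\<And>x y. x \<in> Gc \<Longrightarrow> y \<in> Gc \<Longrightarrow> (\<lambda>t xa. x t xa \<otimes> y t xa) \<in> Gc" by (rule Gc_mult)
  show "(\<lambda>t x. \<one>) \<in> Gc" by (rule Gc_one)
next
  fix x y z assume "x \<in> Gc" "y \<in> Gc" "z \<in> Gc"
  then show "(\<lambda>t xa. x t xa \<otimes> y t xa \<otimes> z t xa) = (\<lambda>t xa. x t xa \<otimes> (y t xa \<otimes> z t xa))"
    using Gc_carr by (simp add: m_assoc)
next
  fix x y assume "x \<in> Gc" "y \<in> Gc"
  then show "(\<lambda>t xa. x t xa \<otimes> y t xa) = (\<lambda>t xa. y t xa \<otimes> x t xa)"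
    using Gc_carr by (simp add: m_comm)
next
  fix x assume "x \<in> Gc"
  then show "(\<lambda>t xa. \<one> \<otimes> x t xa) = x" using Gc_carr by simp
next
  fix x assume x: "x \<in> Gc"
  show "\<exists>y\<in>Gc. (\<lambda>t xa. y t xa \<otimes> x t xa) = (\<lambda>t x. \<one>)"
    by (rule bexI[of _ "\<lambda>t xa. inv (x t xa)"]) (use x Gc_inv Gc_carr in auto)
qed

lemma GG_group: "group GG" using GG_comm_group comm_group.axioms(2) by blast

lemma GG_inv: "g \<in> Gc \<Longrightarrow> inv\<^bsub>GG\<^esub> g = (\<lambda>t x. inv (g t x))"
  by (rule group.inv_equality[OF GG_group]) (use Gc_carr Gc_inv in \<open>auto simp: GG_simps\<close>)

end


context setting
begin

abbreviation "WL \<equiv> wedge A (limX D F) bp"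
abbreviation "Ks \<equiv> K_set D bp F A"
abbreviation "rh \<equiv> rho D bp F A"

lemma bp_lim: "bp \<in> limX D F"
  unfolding limX_def using bp_in F_bp by blast

lemma lim_in: "x \<in> limX D F \<Longrightarrow> x t \<in> D t" unfolding limX_def by blast
lemma lim_compat: "x \<in> limX D F \<Longrightarrow> s \<le> t \<Longrightarrow> F t s (x t) = x s" unfolding limX_def by blast

lemma rho_t: "rh u t = push A (limX D F) bp (D t) (bp t) (\<lambda>x. x t) u"
  unfolding rho_def by simp

lemma rho_Gc:
  assumes u: "u \<in> WL"
  shows "rh u \<in> Gc"
  unfolding Gc_iff
proof (intro conjI allI impI)
  fix t show "rh u t \<in> W t" unfolding rho_t by (rule push_wedge[OF u])
next
  fix t s :: 't assume st: "s \<le> t"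
  have "pushF t s (rh u t) = push A (limX D F) bp (D s) (bp s) (\<lambda>x. F t s (x t)) u"
    unfolding rho_t by (rule push_comp[OF u]) (use lim_in F_bp[OF st] in auto)
  also have "\<dots> = push A (limX D F) bp (D s) (bp s) (\<lambda>x. x s) u"
    by (rule push_cong) (use lim_compat st in auto)
  finally show "pushF t s (rh u t) = rh u s" unfolding rho_t .
qed

lemma rho_map:
  assumes u: "u \<in> WL"
    and "\<And>a b. a \<in> carrier A \<Longrightarrow> b \<in> carrier A \<Longrightarrow> \<phi> (a \<otimes> b) = \<phi> a \<otimes> \<phi> b"
    and "\<phi> \<one> = \<one>" and "\<And>a. a \<in> carrier A \<Longrightarrow> \<phi> a \<in> carrier A"
  shows "(\<lambda>y. \<phi> (u y)) \<in> WL" "rh (\<lambda>y. \<phi> (u y)) = (\<lambda>t x. \<phi> (rh u t x))"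
proof -
  show "(\<lambda>y. \<phi> (u y)) \<in> WL" by (rule push_map(1)[OF u assms(2-4)])
  show "rh (\<lambda>y. \<phi> (u y)) = (\<lambda>t x. \<phi> (rh u t x))"
  proof (rule ext)
    fix t show "rh (\<lambda>y. \<phi> (u y)) t = (\<lambda>x. \<phi> (rh u t x))"
      unfolding rho_t by (rule push_map(2)[OF u assms(2-4)])
  qed
qed

lemma rho_mult:
  assumes u: "u \<in> WL" and v: "v \<in> WL"
  shows "(\<lambda>y. u y \<otimes> v y) \<in> WL" "rh (\<lambda>y. u y \<otimes> v y) = (\<lambda>t x. rh u t x \<otimes> rh v t x)"
proof -
  show "(\<lambda>y. u y \<otimes> v y) \<in> WL" by (rule push_mult(1)[OF u v])
  show "rh (\<lambda>y. u y \<otimes> v y) = (\<lambda>t x. rh u t x \<otimes> rh v t x)"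
  proof (rule ext)
    fix t show "rh (\<lambda>y. u y \<otimes> v y) t = (\<lambda>x. rh u t x \<otimes> rh v t x)"
      unfolding rho_t by (rule push_mult(2)[OF u v])
  qed
qed

lemma rho_inv:
  assumes u: "u \<in> WL"
  shows "(\<lambda>y. inv (u y)) \<in> WL" "rh (\<lambda>y. inv (u y)) = (\<lambda>t x. inv (rh u t x))"
  using rho_map[OF u, of "\<lambda>a. inv a"] by (simp_all add: inv_mult)

lemma Ks_sub: "Ks \<subseteq> Gc"
  unfolding K_set_def using rho_Gc by blast

lemma K_subgroup: "subgroup Ks GG"
proof (rule group.subgroupI[OF GG_group])
  show "Ks \<subseteq> carrier GG" using Ks_sub GG_simps by simp
  show "Ks \<noteq> {}" unfolding K_set_def using one_wedge[of "limX D F" bp] by blast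
next
  fix a assume "a \<in> Ks"
  then obtain u where u: "u \<in> WL" "a = rh u" unfolding K_set_def by blast
  have "inv\<^bsub>GG\<^esub> a = (\<lambda>t x. inv (a t x))" using GG_inv rho_Gc u by blast
  also have "\<dots> = rh (\<lambda>y. inv (u y))" using rho_inv(2)[OF u(1)] u(2) by simp
  finally show "inv\<^bsub>GG\<^esub> a \<in> Ks" unfolding K_set_def using rho_inv(1)[OF u(1)] by blast
next
  fix a b assume "a \<in> Ks" "b \<in> Ks"
  then obtain u v where u: "u \<in> WL" "a = rh u" and v: "v \<in> WL" "b = rh v" unfolding K_set_def by blast
  have "a \<otimes>\<^bsub>GG\<^esub> b = rh (\<lambda>y. u y \<otimes> v y)" using rho_mult(2)[OF u(1) v(1)] u(2) v(2) GG_simps by simp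
  then show "a \<otimes>\<^bsub>GG\<^esub> b \<in> Ks" unfolding K_set_def using rho_mult(1)[OF u(1) v(1)] by blast
qed

lemma K_normal: "Ks \<lhd> GG"
  using comm_group.subgroup_imp_normal[OF GG_comm_group K_subgroup] .

end


lemma (in comm_monoid) finprod_single:
  "f a \<in> carrier G \<Longrightarrow> finprod G f {a} = f a"
  using finprod_insert[of "{}" a f] by simp

locale dsetting = setting A D bp F for A :: "('a, 'c) monoid_scheme" (structure)
  and D :: "'t::order \<Rightarrow> 'x set" and bp and F +
  fixes S :: "'a set" and n :: nat and g :: "'t \<Rightarrow> 'x \<Rightarrow> 'a"
  assumes dir: "directed_poset TYPE('t)" and ml: "mittag_leffler D F"
    and cnt: "countable (UNIV :: 't set)"
    and S: "subgroup S A" and Sdiv: "\<forall>x\<in>S. \<exists>y\<in>S. y [^] n = x"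
    and g: "g \<in> Gc" and gS: "\<And>t x. g t x \<in> S"
begin

lemma S_carr: "x \<in> S \<Longrightarrow> x \<in> carrier A" using S subgroup.subset by blast

lemma dir_ub: "\<exists>u. (s::'t) \<le> u \<and> t \<le> u" using dir unfolding directed_poset_def by blast

definition sML :: "'t \<Rightarrow> 't" where
  "sML t = (SOME s. t \<le> s \<and> (\<forall>r. s \<le> r \<longrightarrow> F s t ` D s = F r t ` D r))"

definition II :: "'t \<Rightarrow> 'x set" where
  "II t = F (sML t) t ` D (sML t)"

lemma sML: "t \<le> sML t \<and> (\<forall>r. sML t \<le> r \<longrightarrow> F (sML t) t ` D (sML t) = F r t ` D r)"
proof -
  have "\<exists>s. t \<le> s \<and> (\<forall>r. s \<le> r \<longrightarrow> F s t ` D s = F r t ` D r)"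
    using ml unfolding mittag_leffler_def by blast
  then show ?thesis unfolding sML_def by (rule someI_ex)
qed

lemma sML_ge: "t \<le> sML t" using sML by blast

lemma II_stab: "sML t \<le> r \<Longrightarrow> II t = F r t ` D r"
  unfolding II_def using sML by blast

lemma II_sub: "II t \<subseteq> D t"
  unfolding II_def using F_maps[OF sML_ge] by blast

lemma II_surj:
  assumes tt: "t \<le> t'"
  shows "F t' t ` II t' = II t"
proof -
  obtain r where r: "sML t \<le> r" "sML t' \<le> r" using dir_ub by blast
  have t'r: "t' \<le> r" using sML_ge r(2) order_trans by blast
  have "F t' t ` II t' = F t' t ` F r t' ` D r" using II_stab[OF r(2)] by simp
  also have "\<dots> = (\<lambda>x. F t' t (F r t' x)) ` D r" by (simp add: image_image)
  also have "\<dots> = F r t ` D r" using F_comp[OF tt t'r] by (intro image_cong) auto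
  also have "\<dots> = II t" using II_stab[OF r(1)] by simp
  finally show ?thesis .
qed

lemma Gc_supp:
  assumes "f \<in> Gc"
  shows "{x. f t x \<noteq> \<one>} \<subseteq> II t"
proof -
  let ?s = "sML t"
  have "f t = pushF ?s t (f ?s)" using Gc_compat[OF assms sML_ge] by simp
  then have "{x. f t x \<noteq> \<one>} \<subseteq> F ?s t ` {y. f ?s y \<noteq> \<one>}"
    using push_supp[OF Gc_wedge[OF assms]] by metis
  also have "\<dots> \<subseteq> F ?s t ` D ?s" using wedgeD(5)[OF Gc_wedge[OF assms]] by blast
  finally show ?thesis unfolding II_def .
qed

definition ee :: "nat \<Rightarrow> 't" where "ee k = from_nat_into (UNIV :: 't set) k"

definition tau :: "nat \<Rightarrow> 't" where
  "tau = rec_nat (ee 0) (\<lambda>k a. SOME u. a \<le> u \<and> ee (Suc k) \<le> u)"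

lemma tau_0: "tau 0 = ee 0" unfolding tau_def by simp

lemma tau_Suc: "tau k \<le> tau (Suc k) \<and> ee (Suc k) \<le> tau (Suc k)"
proof -
  have e: "tau (Suc k) = (SOME u. tau k \<le> u \<and> ee (Suc k) \<le> u)" unfolding tau_def by simp
  show ?thesis unfolding e by (rule someI_ex) (rule dir_ub)
qed

lemma ee_tau: "ee k \<le> tau k"
  by (cases k) (simp_all add: tau_0 tau_Suc)

lemma tau_mono: "m \<le> k \<Longrightarrow> tau m \<le> tau k"
proof (induct k)
  case 0 then show ?case by simp
next
  case (Suc k)
  show ?case
  proof (cases "m = Suc k")
    case True then show ?thesis by simp
  next
    case False
    then have "m \<le> k" using Suc.prems by simp
    then show ?thesis using Suc.hyps tau_Suc order_trans by blast
  qed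
qed

lemma tau_cof: "\<exists>k. t \<le> tau k"
proof -
  obtain k where "from_nat_into (UNIV :: 't set) k = t" using from_nat_into_surj[OF cnt] by blast
  then show ?thesis using ee_tau unfolding ee_def by metis
qed

definition root :: "('x \<Rightarrow> 'a) \<Rightarrow> 'x \<Rightarrow> 'a" where
  "root v = (\<lambda>x. if v x = \<one> then \<one> else (SOME y. y \<in> S \<and> y [^] n = v x))"

lemma root:
  assumes v: "v \<in> wedge A Y y0" and vS: "\<And>x. v x \<in> S"
  shows "root v \<in> wedge A Y y0" "\<And>x. root v x \<in> S" "{x. root v x \<noteq> \<one>} \<subseteq> {x. v x \<noteq> \<one>}"
    "(\<lambda>x. root v x [^] n) = v"
proof -
  have r: "root v x \<in> S \<and> root v x [^] n = v x" for x
  proof (cases "v x = \<one>")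
    case True then show ?thesis unfolding root_def using subgroup.one_closed[OF S] by simp
  next
    case False
    have "\<exists>y. y \<in> S \<and> y [^] n = v x" using Sdiv vS by blast
    then have "(SOME y. y \<in> S \<and> y [^] n = v x) \<in> S \<and> (SOME y. y \<in> S \<and> y [^] n = v x) [^] n = v x"
      by (rule someI_ex)
    then show ?thesis unfolding root_def using False by simp
  qed
  show sub: "{x. root v x \<noteq> \<one>} \<subseteq> {x. v x \<noteq> \<one>}" unfolding root_def by auto
  show "\<And>x. root v x \<in> S" using r by blast
  show "(\<lambda>x. root v x [^] n) = v" using r by blast
  have fin: "finite {x. root v x \<noteq> \<one>}" by (rule finite_subset[OF sub wedgeD(4)[OF v]])
  have c: "root v x \<in> carrier A" for x using r S_carr by blast
  have o: "root v x = \<one>" if "x \<notin> Y \<or> x = y0" for x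
    using that wedgeD(2,3)[OF v] unfolding root_def by auto
  show "root v \<in> wedge A Y y0" unfolding wedge_def mem_Collect_eq using fin c o by blast
qed

definition Inv :: "'t \<Rightarrow> ('x \<Rightarrow> 'a) \<Rightarrow> bool" where
  "Inv t h \<longleftrightarrow> h \<in> W t \<and> (\<forall>x. h x \<in> S) \<and> {x. h x \<noteq> \<one>} \<subseteq> II t \<and> (\<lambda>x. h x [^] n) = g t"

lemma Inv_base: "Inv t (root (g t))"
proof -
  note r = root[OF Gc_wedge[OF g] gS]
  show ?thesis unfolding Inv_def using r Gc_supp[OF g, of t] by blast
qed

end


context dsetting
begin

lemma step:
  assumes tt: "t \<le> t'" and inv: "Inv t h"
  shows "\<exists>h'. Inv t' h' \<and> pushF t' t h' = h"
proof -
  have hw: "h \<in> W t" and hS: "\<And>x. h x \<in> S" and hI: "{x. h x \<noteq> \<one>} \<subseteq> II t"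
    and hn: "(\<lambda>x. h x [^] n) = g t" using inv unfolding Inv_def by blast+
  have gw': "g t' \<in> W t'" by (rule Gc_wedge[OF g])
  define h1 where "h1 = root (g t')"
  note r = root[OF gw' gS, folded h1_def]
  have h1w: "h1 \<in> W t'" and h1S: "\<And>x. h1 x \<in> S" and h1n: "(\<lambda>x. h1 x [^] n) = g t'"
    using r by blast+
  have h1I: "{x. h1 x \<noteq> \<one>} \<subseteq> II t'" using r(3) Gc_supp[OF g, of t'] by blast
  define p1 where "p1 = pushF t' t h1"
  have p1w: "p1 \<in> W t" unfolding p1_def by (rule push_wedge[OF h1w])
  have p1n: "(\<lambda>x. p1 x [^] n) = g t"
  proof -
    have "(\<lambda>x. p1 x [^] n) = pushF t' t (\<lambda>y. h1 y [^] n)"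
      unfolding p1_def by (rule push_pow(2)[OF h1w, symmetric])
    also have "\<dots> = g t" unfolding h1n by (rule Gc_compat[OF g tt])
    finally show ?thesis .
  qed
  have p1S: "\<And>x. p1 x \<in> S" unfolding p1_def by (rule push_sub[OF S h1w h1S])
  have p1I: "{x. p1 x \<noteq> \<one>} \<subseteq> II t"
  proof -
    have "{x. p1 x \<noteq> \<one>} \<subseteq> F t' t ` {x. h1 x \<noteq> \<one>}" unfolding p1_def by (rule push_supp[OF h1w])
    also have "\<dots> \<subseteq> F t' t ` II t'" using h1I by blast
    also have "\<dots> = II t" by (rule II_surj[OF tt])
    finally show ?thesis .
  qed
  define d where "d = (\<lambda>x. h x \<otimes> inv (p1 x))"
  have dw: "d \<in> W t" unfolding d_def by (rule push_mult(1)[OF hw push_inv(1)[OF p1w]])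
  have dS: "\<And>x. d x \<in> S" unfolding d_def
    using subgroup.m_closed[OF S] subgroup.m_inv_closed[OF S] hS p1S by blast
  have dn: "d x [^] n = \<one>" for x
  proof -
    have c: "h x \<in> carrier A" "p1 x \<in> carrier A" using hS p1S S_carr by blast+
    have "d x [^] n = h x [^] n \<otimes> inv (p1 x) [^] n" unfolding d_def using c by (simp add: nat_pow_distrib)
    also have "\<dots> = h x [^] n \<otimes> inv (p1 x [^] n)" using c by (simp add: nat_pow_inv)
    also have "\<dots> = g t x \<otimes> inv (g t x)" using fun_cong[OF hn, of x] fun_cong[OF p1n, of x] by simp
    also have "\<dots> = \<one>" using Gc_carr[OF g] by simp
    finally show ?thesis .
  qed
  have dI: "{x. d x \<noteq> \<one>} \<subseteq> II t"
  proof
    fix x assume "x \<in> {x. d x \<noteq> \<one>}"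
    then have "h x \<noteq> \<one> \<or> p1 x \<noteq> \<one>" unfolding d_def by auto
    then show "x \<in> II t" using hI p1I by blast
  qed
  have ex: "\<exists>y. y \<in> II t' \<and> F t' t y = x" if "x \<in> II t" for x
  proof -
    have "x \<in> F t' t ` II t'" using that II_surj[OF tt] by simp
    then obtain y where "y \<in> II t'" "x = F t' t y" by (rule imageE)
    then show ?thesis by auto
  qed
  define \<sigma> where "\<sigma> x = (SOME y. y \<in> II t' \<and> F t' t y = x)" for x
  have \<sigma>: "\<sigma> x \<in> II t' \<and> F t' t (\<sigma> x) = x" if "x \<in> II t" for x
    unfolding \<sigma>_def by (rule someI_ex[OF ex[OF that]])
  have dI': "d x \<noteq> \<one> \<Longrightarrow> x \<in> II t" for x using dI by blast
  define Ssec where "Ssec = \<sigma> ` {x. d x \<noteq> \<one>}"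
  have finSsec: "finite Ssec" unfolding Ssec_def by (rule finite_imageI[OF wedgeD(4)[OF dw]])
  have Ssec_F: "d (F t' t y) \<noteq> \<one> \<and> \<sigma> (F t' t y) = y \<and> y \<in> II t'" if "y \<in> Ssec" for y
  proof -
    obtain x where x: "d x \<noteq> \<one>" "y = \<sigma> x" using \<open>y \<in> Ssec\<close> unfolding Ssec_def by (rule imageE) simp
    have "F t' t y = x" "y \<in> II t'" using \<sigma>[OF dI'[OF x(1)]] x(2) by simp_all
    then show ?thesis using x by simp
  qed
  have Ssec_II: "Ssec \<subseteq> II t'" using Ssec_F by blast
  have Ssec_D: "Ssec \<subseteq> D t'" using Ssec_II II_sub by blast
  have Ssec_bp: "bp t' \<notin> Ssec"
  proof
    assume "bp t' \<in> Ssec"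
    then have "d (F t' t (bp t')) \<noteq> \<one>" using Ssec_F by blast
    then show False using F_bp[OF tt] wedgeD(3)[OF dw] by simp
  qed
  define d' where "d' = (\<lambda>y. if y \<in> Ssec then d (F t' t y) else \<one>)"
  have d'S: "\<And>y. d' y \<in> S" unfolding d'_def using dS subgroup.one_closed[OF S] by simp
  have d'n: "\<And>y. d' y [^] n = \<one>" unfolding d'_def using dn by simp
  have d'supp: "{y. d' y \<noteq> \<one>} \<subseteq> Ssec" unfolding d'_def by auto
  have d'w: "d' \<in> W t'"
  proof -
    have fin: "finite {y. d' y \<noteq> \<one>}" by (rule finite_subset[OF d'supp finSsec])
    have c: "d' y \<in> carrier A" for y using d'S S_carr by blast
    have o: "d' y = \<one>" if "y \<notin> D t' \<or> y = bp t'" for y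
      using that Ssec_D Ssec_bp unfolding d'_def by auto
    show ?thesis unfolding wedge_def mem_Collect_eq using fin c o by blast
  qed
  have d'push: "pushF t' t d' = d"
  proof
    fix z
    have e: "pushF t' t d' z = (if z \<in> D t \<and> z \<noteq> bp t then finprod A d' {y\<in>Ssec. F t' t y = z} else \<one>)"
      by (rule push_eq[OF d'w finSsec d'supp])
    show "pushF t' t d' z = d z"
    proof (cases "z \<in> D t \<and> z \<noteq> bp t")
      case False
      then have "d z = \<one>" using wedgeD(2,3)[OF dw] by (cases "z \<in> D t") auto
      then show ?thesis using e False by simp
    next
      case True
      show ?thesis
      proof (cases "d z = \<one>")
        case True2: True
        have em: "{y\<in>Ssec. F t' t y = z} = {}" using Ssec_F True2 by blast
        have f0: "finprod A d' {} = \<one>" by (rule finprod_empty)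
        show ?thesis using e[unfolded em f0] True True2 by simp
      next
        case False2: False
        have zI: "z \<in> II t" using dI' False2 by blast
        have sz: "\<sigma> z \<in> Ssec" unfolding Ssec_def by (rule imageI) (simp add: False2)
        have Fsz: "F t' t (\<sigma> z) = z" using \<sigma>[OF zI] by blast
        have se: "{y\<in>Ssec. F t' t y = z} = {\<sigma> z}"
        proof
          show "{y\<in>Ssec. F t' t y = z} \<subseteq> {\<sigma> z}"
          proof
            fix y assume y: "y \<in> {y\<in>Ssec. F t' t y = z}"
            then have "\<sigma> (F t' t y) = y" using Ssec_F by blast
            then show "y \<in> {\<sigma> z}" using y by simp
          qed
          show "{\<sigma> z} \<subseteq> {y\<in>Ssec. F t' t y = z}" using sz Fsz by blast
        qed
        have dsz: "d' (\<sigma> z) = d z" unfolding d'_def using sz Fsz by simp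
        have "d' (\<sigma> z) \<in> carrier A" using d'S S_carr by blast
        then have fs: "finprod A d' {\<sigma> z} = d z" using finprod_single[of d' "\<sigma> z"] dsz by simp
        show ?thesis using e[unfolded se fs] True by simp
      qed
    qed
  qed
  define h' where "h' = (\<lambda>y. h1 y \<otimes> d' y)"
  have h'w: "h' \<in> W t'" unfolding h'_def by (rule push_mult(1)[OF h1w d'w])
  have h'S: "\<And>y. h' y \<in> S" unfolding h'_def using subgroup.m_closed[OF S] h1S d'S by blast
  have h'I: "{y. h' y \<noteq> \<one>} \<subseteq> II t'"
  proof
    fix y assume "y \<in> {y. h' y \<noteq> \<one>}"
    then have "h1 y \<noteq> \<one> \<or> d' y \<noteq> \<one>" unfolding h'_def by auto
    then show "y \<in> II t'" using h1I d'supp Ssec_II by blast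
  qed
  have h'n: "(\<lambda>y. h' y [^] n) = g t'"
  proof
    fix y
    have c: "h1 y \<in> carrier A" "d' y \<in> carrier A" using h1S d'S S_carr by blast+
    have "h' y [^] n = h1 y [^] n \<otimes> d' y [^] n" unfolding h'_def using c by (simp add: nat_pow_distrib)
    also have "\<dots> = g t' y" using fun_cong[OF h1n, of y] d'n Gc_carr[OF g] by simp
    finally show "h' y [^] n = g t' y" .
  qed
  have h'push: "pushF t' t h' = h"
  proof
    fix z
    have c: "h z \<in> carrier A" "p1 z \<in> carrier A" using hS p1S S_carr by blast+
    have "pushF t' t h' z = p1 z \<otimes> d z"
      unfolding h'_def push_mult(2)[OF h1w d'w] d'push p1_def by simp
    also have "\<dots> = h z \<otimes> (p1 z \<otimes> inv (p1 z))" unfolding d_def using c by (simp add: m_lcomm)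
    also have "\<dots> = h z" using c by simp
    finally show "pushF t' t h' z = h z" .
  qed
  show ?thesis unfolding Inv_def using h'w h'S h'I h'n h'push by blast
qed

end


context dsetting
begin

definition hs :: "nat \<Rightarrow> 'x \<Rightarrow> 'a" where
  "hs = rec_nat (SOME h. Inv (tau 0) h)
     (\<lambda>k h. SOME h'. Inv (tau (Suc k)) h' \<and> pushF (tau (Suc k)) (tau k) h' = h)"

lemma hs_0: "hs 0 = (SOME h. Inv (tau 0) h)" unfolding hs_def by simp
lemma hs_Suc: "hs (Suc k) = (SOME h'. Inv (tau (Suc k)) h' \<and> pushF (tau (Suc k)) (tau k) h' = hs k)"
  unfolding hs_def by simp

lemma hs_Inv: "Inv (tau k) (hs k)"
proof (induct k)
  case 0
  show ?case unfolding hs_0 by (rule someI[where P="Inv (tau 0)", OF Inv_base])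
next
  case (Suc k)
  have "\<exists>h'. Inv (tau (Suc k)) h' \<and> pushF (tau (Suc k)) (tau k) h' = hs k"
    by (rule step[OF _ Suc]) (use tau_Suc in blast)
  then have "Inv (tau (Suc k)) (hs (Suc k)) \<and> pushF (tau (Suc k)) (tau k) (hs (Suc k)) = hs k"
    unfolding hs_Suc by (rule someI_ex)
  then show ?case by blast
qed

lemma hs_step: "pushF (tau (Suc k)) (tau k) (hs (Suc k)) = hs k"
proof -
  have "\<exists>h'. Inv (tau (Suc k)) h' \<and> pushF (tau (Suc k)) (tau k) h' = hs k"
    by (rule step[OF _ hs_Inv]) (use tau_Suc in blast)
  then have "Inv (tau (Suc k)) (hs (Suc k)) \<and> pushF (tau (Suc k)) (tau k) (hs (Suc k)) = hs k"
    unfolding hs_Suc by (rule someI_ex)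
  then show ?thesis by blast
qed

lemma hs_W: "hs k \<in> W (tau k)" using hs_Inv unfolding Inv_def by blast

lemma hs_compat: "m \<le> k \<Longrightarrow> pushF (tau k) (tau m) (hs k) = hs m"
proof (induct k)
  case 0 then show ?case using pushF_id[OF hs_W] by simp
next
  case (Suc k)
  show ?case
  proof (cases "m = Suc k")
    case True then show ?thesis using pushF_id[OF hs_W] by simp
  next
    case False
    then have mk: "m \<le> k" using Suc.prems by simp
    have "pushF (tau (Suc k)) (tau m) (hs (Suc k))
        = pushF (tau k) (tau m) (pushF (tau (Suc k)) (tau k) (hs (Suc k)))"
      by (rule pushF_comp[symmetric]) (use tau_mono[OF mk] tau_Suc hs_W in auto)
    also have "\<dots> = pushF (tau k) (tau m) (hs k)" by (simp only: hs_step)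
    also have "\<dots> = hs m" by (rule Suc.hyps[OF mk])
    finally show ?thesis .
  qed
qed

definition NN :: "'t \<Rightarrow> nat" where "NN t = (LEAST k. t \<le> tau k)"

lemma NN: "t \<le> tau (NN t)"
  unfolding NN_def using tau_cof by (rule LeastI_ex)

lemma NN_le: "t \<le> tau k \<Longrightarrow> NN t \<le> k"
  unfolding NN_def by (rule Least_le)

definition hh :: "'t \<Rightarrow> 'x \<Rightarrow> 'a" where
  "hh t = pushF (tau (NN t)) t (hs (NN t))"

lemma hh_eq:
  assumes tk: "t \<le> tau k"
  shows "hh t = pushF (tau k) t (hs k)"
proof -
  have nk: "NN t \<le> k" by (rule NN_le[OF tk])
  have "pushF (tau k) t (hs k) = pushF (tau (NN t)) t (pushF (tau k) (tau (NN t)) (hs k))"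
    by (rule pushF_comp[symmetric]) (use NN tau_mono[OF nk] hs_W in auto)
  also have "\<dots> = hh t" unfolding hs_compat[OF nk] hh_def ..
  finally show ?thesis by simp
qed

lemma hh_Gc: "hh \<in> Gc"
  unfolding Gc_iff
proof (intro conjI allI impI)
  fix t show "hh t \<in> W t" unfolding hh_def by (rule push_wedge[OF hs_W])
next
  fix t s :: 't assume st: "s \<le> t"
  obtain k where tk: "t \<le> tau k" using tau_cof by blast
  have sk: "s \<le> tau k" using st tk order_trans by blast
  have "pushF t s (hh t) = pushF t s (pushF (tau k) t (hs k))" unfolding hh_eq[OF tk] ..
  also have "\<dots> = pushF (tau k) s (hs k)" by (rule pushF_comp[OF st tk hs_W])
  also have "\<dots> = hh s" unfolding hh_eq[OF sk] ..
  finally show "pushF t s (hh t) = hh s" .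
qed

lemma hh_S: "hh t x \<in> S"
proof -
  have "\<And>y. hs (NN t) y \<in> S" using hs_Inv unfolding Inv_def by blast
  then show ?thesis unfolding hh_def by (rule push_sub[OF S hs_W])
qed

lemma hh_pow: "(\<lambda>t x. hh t x [^] n) = g"
proof (rule ext)
  fix t
  obtain k where tk: "t \<le> tau k" using tau_cof by blast
  have hn: "(\<lambda>x. hs k x [^] n) = g (tau k)" using hs_Inv unfolding Inv_def by blast
  have "(\<lambda>x. hh t x [^] n) = pushF (tau k) t (\<lambda>y. hs k y [^] n)"
    unfolding hh_eq[OF tk] by (rule push_pow(2)[OF hs_W, symmetric])
  also have "\<dots> = g t" unfolding hn by (rule Gc_compat[OF g tk])
  finally show "(\<lambda>x. hh t x [^] n) = g t" .
qed

lemma div_G: "\<exists>h\<in>Gc. (\<forall>t x. h t x \<in> S) \<and> (\<lambda>t x. h t x [^] n) = g"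
  using hh_Gc hh_S hh_pow by blast

end


locale dsum = comm_group A for A :: "('a, 'c) monoid_scheme" (structure) +
  fixes Dd Bb :: "'a set"
  assumes sD: "subgroup Dd A" and sB: "subgroup Bb A" and DB1: "Dd \<inter> Bb = {\<one>}"
    and DB: "Dd <#> Bb = carrier A"
begin

definition pD :: "'a \<Rightarrow> 'a" where "pD a = (THE d. d \<in> Dd \<and> (\<exists>b\<in>Bb. a = d \<otimes> b))"
definition pB :: "'a \<Rightarrow> 'a" where "pB a = inv (pD a) \<otimes> a"

lemma D_carr: "x \<in> Dd \<Longrightarrow> x \<in> carrier A" using sD subgroup.subset by blast
lemma B_carr: "x \<in> Bb \<Longrightarrow> x \<in> carrier A" using sB subgroup.subset by blast

lemma uniq:
  assumes "d \<in> Dd" "b \<in> Bb" "d' \<in> Dd" "b' \<in> Bb" "d \<otimes> b = d' \<otimes> b'"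
  shows "d = d'"
proof -
  have c: "d \<in> carrier A" "b \<in> carrier A" "d' \<in> carrier A" "b' \<in> carrier A"
    using assms(1) D_carr assms(2) B_carr assms(3) D_carr assms(4) B_carr by auto
  have "inv d' \<otimes> d = b' \<otimes> inv b"
  proof -
    have "inv d' \<otimes> (d \<otimes> b) \<otimes> inv b = inv d' \<otimes> d"
      using c by (simp add: m_assoc)
    moreover have "inv d' \<otimes> (d' \<otimes> b') \<otimes> inv b = b' \<otimes> inv b"
      using c by (simp add: m_assoc[symmetric])
    ultimately show ?thesis using assms(5) by simp
  qed
  note eq = this
  have i1: "inv d' \<otimes> d \<in> Dd" using sD assms(1,3) by (simp add: subgroup.m_closed subgroup.m_inv_closed)
  have "b' \<otimes> inv b \<in> Bb" using sB assms(2,4) by (simp add: subgroup.m_closed subgroup.m_inv_closed)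
  then have i2: "inv d' \<otimes> d \<in> Bb" unfolding eq .
  have "inv d' \<otimes> d \<in> Dd \<inter> Bb" using i1 i2 by (rule IntI)
  then have e: "inv d' \<otimes> d = \<one>" unfolding DB1 by simp
  have "d = d' \<otimes> (inv d' \<otimes> d)" using c by (simp add: m_assoc[symmetric])
  then show "d = d'" unfolding e using c by simp
qed

lemma decomp_ex: "a \<in> carrier A \<Longrightarrow> \<exists>d\<in>Dd. \<exists>b\<in>Bb. a = d \<otimes> b"
  using DB unfolding set_mult_def by blast

lemma pD_eq:
  assumes "d \<in> Dd" "b \<in> Bb"
  shows "pD (d \<otimes> b) = d"
  unfolding pD_def
proof (rule the_equality)
  show "d \<in> Dd \<and> (\<exists>b'\<in>Bb. d \<otimes> b = d \<otimes> b')" using assms by blast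
next
  fix d' assume "d' \<in> Dd \<and> (\<exists>b'\<in>Bb. d \<otimes> b = d' \<otimes> b')"
  then show "d' = d" using uniq assms by metis
qed

lemma pB_eq:
  assumes "d \<in> Dd" "b \<in> Bb"
  shows "pB (d \<otimes> b) = b"
  unfolding pB_def pD_eq[OF assms] using assms D_carr B_carr by (simp add: m_assoc[symmetric])

lemma decomp:
  assumes "a \<in> carrier A"
  shows "pD a \<in> Dd" "pB a \<in> Bb" "pD a \<otimes> pB a = a"
proof -
  obtain d b where db: "d \<in> Dd" "b \<in> Bb" "a = d \<otimes> b" using decomp_ex[OF assms] by blast
  show "pD a \<in> Dd" "pB a \<in> Bb" using pD_eq[OF db(1,2)] pB_eq[OF db(1,2)] db by simp_all
  show "pD a \<otimes> pB a = a" using pD_eq[OF db(1,2)] pB_eq[OF db(1,2)] db by simp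
qed

lemma pD_hom:
  assumes "a \<in> carrier A" "a' \<in> carrier A"
  shows "pD (a \<otimes> a') = pD a \<otimes> pD a'" "pB (a \<otimes> a') = pB a \<otimes> pB a'"
proof -
  obtain d b where db: "d \<in> Dd" "b \<in> Bb" "a = d \<otimes> b" using decomp_ex[OF assms(1)] by blast
  obtain d' b' where db': "d' \<in> Dd" "b' \<in> Bb" "a' = d' \<otimes> b'" using decomp_ex[OF assms(2)] by blast
  have c: "d \<in> carrier A" "b \<in> carrier A" "d' \<in> carrier A" "b' \<in> carrier A"
    using db db' D_carr B_carr by blast+
  have e: "a \<otimes> a' = (d \<otimes> d') \<otimes> (b \<otimes> b')" using db(3) db'(3) c by (simp add: m_ac)
  have m: "d \<otimes> d' \<in> Dd" "b \<otimes> b' \<in> Bb" using db db' sD sB by (simp_all add: subgroup.m_closed)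
  have pa: "pD a = d" "pB a = b" "pD a' = d'" "pB a' = b'"
    using db db' pD_eq pB_eq by simp_all
  show "pD (a \<otimes> a') = pD a \<otimes> pD a'" by (simp only: e pD_eq[OF m] pa)
  show "pB (a \<otimes> a') = pB a \<otimes> pB a'" by (simp only: e pB_eq[OF m] pa)
qed

lemma one_D: "\<one> \<in> Dd" using sD subgroup.one_closed by blast
lemma one_B: "\<one> \<in> Bb" using sB subgroup.one_closed by blast

lemma p_one: "pD \<one> = \<one>" "pB \<one> = \<one>"
  using pD_eq[OF one_D one_B] pB_eq[OF one_D one_B] by simp_all

lemma p_carr: "a \<in> carrier A \<Longrightarrow> pD a \<in> carrier A" "a \<in> carrier A \<Longrightarrow> pB a \<in> carrier A"
  using decomp D_carr B_carr by blast+

lemma pB_B: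
  assumes "b \<in> Bb" shows "pB b = b"
proof -
  have "pB (\<one> \<otimes> b) = b" by (rule pB_eq[OF one_D assms])
  then show ?thesis using B_carr[OF assms] by simp
qed
lemma pB_D:
  assumes "d \<in> Dd" shows "pB d = \<one>"
proof -
  have "pB (d \<otimes> \<one>) = \<one>" by (rule pB_eq[OF assms one_B])
  then show ?thesis using D_carr[OF assms] by simp
qed

end


locale fsetting = setting A D bp F for A :: "('a, 'c) monoid_scheme" (structure)
  and D :: "'t::order \<Rightarrow> 'x set" and bp F +
  assumes dir: "directed_poset TYPE('t)" and ml: "mittag_leffler D F"
    and cnt: "countable (UNIV :: 't set)"
begin

lemma div_gen:
  assumes S: "subgroup S A" and Sdiv: "\<forall>x\<in>S. \<exists>y\<in>S. y [^] (n::nat) = x"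
    and g: "g \<in> Gc" and gS: "\<And>t x. g t x \<in> S"
  shows "\<exists>h\<in>Gc. (\<forall>t x. h t x \<in> S) \<and> (\<lambda>t x. h t x [^] n) = g"
proof -
  interpret d: dsetting A D bp F S n g
    by (rule dsetting.intro[OF setting_axioms dsetting_axioms.intro[OF dir ml cnt S Sdiv g gS]])
  show ?thesis by (rule d.div_G)
qed

abbreviation "HH \<equiv> H_grp D bp F A"

lemma HH_eq: "HH = GG Mod Ks" unfolding H_grp_def ..

lemma GG_monoid: "monoid GG" using GG_group group.is_monoid by blast

lemma GG_pow': "g [^]\<^bsub>GG\<lparr>carrier := Cs\<rparr>\<^esub> (n::nat) = (\<lambda>t x. g t x [^] n)"
  using monoid.nat_pow_consistent[OF GG_monoid, of g n Cs] GG_pow by simp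

lemma GG_ndiv:
  assumes "n_divisible A n"
  shows "n_divisible GG n"
  unfolding n_divisible_def
proof
  fix g assume "g \<in> carrier GG"
  then have g: "g \<in> Gc" using GG_simps by simp
  have Sdiv: "\<forall>x\<in>carrier A. \<exists>y\<in>carrier A. y [^] n = x" using assms unfolding n_divisible_def .
  obtain h where h: "h \<in> Gc" "(\<lambda>t x. h t x [^] n) = g"
    using div_gen[OF subgroup_self Sdiv g Gc_carr[OF g]] by blast
  show "\<exists>y\<in>carrier GG. y [^]\<^bsub>GG\<^esub> n = g"
    using h GG_pow GG_simps by auto
qed

lemma HH_ndiv:
  assumes "n_divisible GG n"
  shows "n_divisible HH n"
  unfolding n_divisible_def HH_eq
proof
  fix Q assume "Q \<in> carrier (GG Mod Ks)"
  then obtain g where g: "g \<in> carrier GG" "Q = Ks #>\<^bsub>GG\<^esub> g"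
    unfolding carrier_FactGroup by blast
  obtain h where h: "h \<in> carrier GG" "h [^]\<^bsub>GG\<^esub> n = g"
    using assms g(1) unfolding n_divisible_def by blast
  have "(Ks #>\<^bsub>GG\<^esub> h) [^]\<^bsub>GG Mod Ks\<^esub> n = Ks #>\<^bsub>GG\<^esub> g"
    using normal.FactGroup_pow[OF K_normal h(1), of n] h(2) by simp
  moreover have "Ks #>\<^bsub>GG\<^esub> h \<in> carrier (GG Mod Ks)" unfolding carrier_FactGroup using h(1) by blast
  ultimately show "\<exists>y\<in>carrier (GG Mod Ks). y [^]\<^bsub>GG Mod Ks\<^esub> n = Q" using g(2) by blast
qed

end


context setting
begin

lemma Gc_map:
  assumes f: "f \<in> Gc"
    and hm: "\<And>a b. a \<in> carrier A \<Longrightarrow> b \<in> carrier A \<Longrightarrow> \<phi> (a \<otimes> b) = \<phi> a \<otimes> \<phi> b"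
    and h1: "\<phi> \<one> = \<one>" and hc: "\<And>a. a \<in> carrier A \<Longrightarrow> \<phi> a \<in> carrier A"
  shows "(\<lambda>t x. \<phi> (f t x)) \<in> Gc"
  unfolding Gc_iff
proof (intro conjI allI impI)
  fix t show "(\<lambda>x. \<phi> (f t x)) \<in> W t" by (rule push_map(1)[OF Gc_wedge[OF f] hm h1 hc])
next
  fix t s :: 't assume st: "s \<le> t"
  show "pushF t s (\<lambda>x. \<phi> (f t x)) = (\<lambda>x. \<phi> (f s x))"
  proof -
    have "pushF t s (\<lambda>x. \<phi> (f t x)) = (\<lambda>z. \<phi> (pushF t s (f t) z))"
      by (rule push_map(2)[OF Gc_wedge[OF f] hm h1 hc])
    then show ?thesis using Gc_compat[OF f st] by simp
  qed
qed

end

locale fsd = fsetting A D bp F + dsum A Dd Bb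
  for A :: "('a, 'c) monoid_scheme" (structure) and D :: "'t::order \<Rightarrow> 'x set" and bp F
    and Dd Bb :: "'a set" +
  fixes N :: nat
  assumes divD: "\<And>n::nat. n > 0 \<Longrightarrow> \<forall>x\<in>Dd. \<exists>y\<in>Dd. y [^] n = x"
    and Npos: "N > 0" and bndB: "\<And>x. x \<in> Bb \<Longrightarrow> x [^] N = \<one>"
begin

definition DG where "DG = {f \<in> Gc. \<forall>t x. f t x \<in> Dd}"
definition BG where "BG = {f \<in> Gc. \<forall>t x. f t x \<in> Bb}"

lemma sub_GG:
  assumes sS: "subgroup S A"
  shows "subgroup {f \<in> Gc. \<forall>t x. f t x \<in> S} GG"
proof (rule group.subgroupI[OF GG_group])
  show "{f \<in> Gc. \<forall>t x. f t x \<in> S} \<subseteq> carrier GG" using GG_simps by auto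
  have "(\<lambda>t x. \<one>) \<in> {f \<in> Gc. \<forall>t x. f t x \<in> S}" using Gc_one subgroup.one_closed[OF sS] by simp
  then show "{f \<in> Gc. \<forall>t x. f t x \<in> S} \<noteq> {}" by blast
next
  fix a assume a: "a \<in> {f \<in> Gc. \<forall>t x. f t x \<in> S}"
  then have "inv\<^bsub>GG\<^esub> a = (\<lambda>t x. inv (a t x))" using GG_inv by blast
  then show "inv\<^bsub>GG\<^esub> a \<in> {f \<in> Gc. \<forall>t x. f t x \<in> S}"
    using a Gc_inv subgroup.m_inv_closed[OF sS] by simp
next
  fix a b assume a: "a \<in> {f \<in> Gc. \<forall>t x. f t x \<in> S}" and b: "b \<in> {f \<in> Gc. \<forall>t x. f t x \<in> S}"
  have "a \<otimes>\<^bsub>GG\<^esub> b = (\<lambda>t x. a t x \<otimes> b t x)" using GG_simps by simp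
  then show "a \<otimes>\<^bsub>GG\<^esub> b \<in> {f \<in> Gc. \<forall>t x. f t x \<in> S}"
    using a b Gc_mult subgroup.m_closed[OF sS] by simp
qed

lemma DG_sub: "subgroup DG GG" unfolding DG_def by (rule sub_GG[OF sD])
lemma BG_sub: "subgroup BG GG" unfolding BG_def by (rule sub_GG[OF sB])

lemma DG_root:
  assumes n: "(n::nat) > 0" and f: "f \<in> DG"
  shows "\<exists>h\<in>DG. h [^]\<^bsub>GG\<^esub> n = f"
proof -
  have fG: "f \<in> Gc" and fD: "\<And>t x. f t x \<in> Dd" using f unfolding DG_def by auto
  obtain h where h: "h \<in> Gc" "\<forall>t x. h t x \<in> Dd" "(\<lambda>t x. h t x [^] n) = f"
    using div_gen[OF sD divD[OF n] fG fD] by blast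
  then show ?thesis unfolding DG_def using GG_pow by auto
qed

lemma BG_bnd: "f \<in> BG \<Longrightarrow> f [^]\<^bsub>GG\<^esub> N = \<one>\<^bsub>GG\<^esub>"
  unfolding BG_def GG_pow GG_simps using bndB by auto

lemma GG_almost: "almost_divisible GG"
  unfolding almost_divisible_def
proof (intro exI conjI)
  show "subgroup DG GG" by (rule DG_sub)
  show "subgroup BG GG" by (rule BG_sub)
  show "divisible_grp (GG\<lparr>carrier := DG\<rparr>)"
    unfolding divisible_grp_def n_divisible_def
  proof (intro allI impI ballI)
    fix n :: nat and f assume n: "n > 0" and f: "f \<in> carrier (GG\<lparr>carrier := DG\<rparr>)"
    obtain h where "h \<in> DG" "h [^]\<^bsub>GG\<^esub> n = f" using DG_root[OF n] f by auto
    then show "\<exists>y\<in>carrier (GG\<lparr>carrier := DG\<rparr>). y [^]\<^bsub>GG\<lparr>carrier := DG\<rparr>\<^esub> n = f"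
      using GG_pow GG_pow' by auto
  qed
  show "bounded_grp (GG\<lparr>carrier := BG\<rparr>)"
    unfolding bounded_grp_def
  proof (intro exI conjI ballI)
    show "N > 0" by (rule Npos)
    fix f assume "f \<in> carrier (GG\<lparr>carrier := BG\<rparr>)"
    then have "f \<in> BG" by simp
    then show "f [^]\<^bsub>GG\<lparr>carrier := BG\<rparr>\<^esub> N = \<one>\<^bsub>GG\<lparr>carrier := BG\<rparr>\<^esub>"
      using BG_bnd GG_pow GG_pow' by simp
  qed
  show "DG \<inter> BG = {\<one>\<^bsub>GG\<^esub>}"
  proof
    show "DG \<inter> BG \<subseteq> {\<one>\<^bsub>GG\<^esub>}"
    proof
      fix f assume "f \<in> DG \<inter> BG"
      then have "f t x \<in> Dd \<inter> Bb" for t x unfolding DG_def BG_def by auto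
      then have "f t x = \<one>" for t x using DB1 by blast
      then show "f \<in> {\<one>\<^bsub>GG\<^esub>}" using GG_simps by auto
    qed
    show "{\<one>\<^bsub>GG\<^esub>} \<subseteq> DG \<inter> BG"
      using GG_simps Gc_one one_D one_B unfolding DG_def BG_def by auto
  qed
  show "DG <#>\<^bsub>GG\<^esub> BG = carrier GG"
  proof
    show "DG <#>\<^bsub>GG\<^esub> BG \<subseteq> carrier GG"
    proof
      fix z assume "z \<in> DG <#>\<^bsub>GG\<^esub> BG"
      then obtain a b where ab: "a \<in> DG" "b \<in> BG" "z = a \<otimes>\<^bsub>GG\<^esub> b" unfolding set_mult_def by blast
      have "a \<in> Gc" "b \<in> Gc" using ab unfolding DG_def BG_def by auto
      then show "z \<in> carrier GG" using Gc_mult ab(3) GG_simps by simp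
    qed
    show "carrier GG \<subseteq> DG <#>\<^bsub>GG\<^esub> BG"
    proof
      fix f assume "f \<in> carrier GG"
      then have f: "f \<in> Gc" using GG_simps by simp
      let ?a = "\<lambda>t x. pD (f t x)" and ?b = "\<lambda>t x. pB (f t x)"
      have a: "?a \<in> DG" unfolding DG_def
        using Gc_map[OF f, of pD] pD_hom(1) p_one(1) p_carr(1) decomp(1) Gc_carr[OF f] by auto
      have b: "?b \<in> BG" unfolding BG_def
        using Gc_map[OF f, of pB] pD_hom(2) p_one(2) p_carr(2) decomp(2) Gc_carr[OF f] by auto
      have "?a \<otimes>\<^bsub>GG\<^esub> ?b = f" using GG_simps decomp(3) Gc_carr[OF f] by simp
      then show "f \<in> DG <#>\<^bsub>GG\<^esub> BG" using a b unfolding set_mult_def by blast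
    qed
  qed
qed

end


context fsd
begin

abbreviation "pr \<equiv> (\<lambda>a. Ks #>\<^bsub>GG\<^esub> a)"

lemma HH_group: "group (GG Mod Ks)" by (rule normal.factorgroup_is_group[OF K_normal])

lemma pr_hom: "group_hom GG (GG Mod Ks) pr"
  unfolding group_hom_def group_hom_axioms_def
  using GG_group HH_group normal.r_coset_hom_Mod[OF K_normal] by blast

lemma HH_monoid: "monoid (GG Mod Ks)" using HH_group group.is_monoid by blast

lemma Ks_const: "k \<in> Ks \<Longrightarrow> pr k = Ks"
  by (rule subgroup.rcos_const[OF K_subgroup GG_group])

lemma GG_decomp: "f \<in> carrier GG \<Longrightarrow> f \<in> DG <#>\<^bsub>GG\<^esub> BG"
proof -
  assume "f \<in> carrier GG"
  then have f: "f \<in> Gc" using GG_simps by simp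
  let ?a = "\<lambda>t x. pD (f t x)" and ?b = "\<lambda>t x. pB (f t x)"
  have a: "?a \<in> DG" unfolding DG_def
    using Gc_map[OF f, of pD] pD_hom(1) p_one(1) p_carr(1) decomp(1) Gc_carr[OF f] by auto
  have b: "?b \<in> BG" unfolding BG_def
    using Gc_map[OF f, of pB] pD_hom(2) p_one(2) p_carr(2) decomp(2) Gc_carr[OF f] by auto
  have "?a \<otimes>\<^bsub>GG\<^esub> ?b = f" using GG_simps decomp(3) Gc_carr[OF f] by simp
  then show "f \<in> DG <#>\<^bsub>GG\<^esub> BG" using a b unfolding set_mult_def by blast
qed

lemma HH_almost: "almost_divisible HH"
  unfolding almost_divisible_def HH_eq
proof (intro exI conjI)
  show sDH: "subgroup (pr ` DG) (GG Mod Ks)"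
    by (rule group_hom.subgroup_img_is_subgroup[OF pr_hom DG_sub])
  show sBH: "subgroup (pr ` BG) (GG Mod Ks)"
    by (rule group_hom.subgroup_img_is_subgroup[OF pr_hom BG_sub])
  show "divisible_grp ((GG Mod Ks)\<lparr>carrier := pr ` DG\<rparr>)"
    unfolding divisible_grp_def n_divisible_def
  proof (intro allI impI ballI)
    fix n :: nat and Q assume n: "n > 0" and Q: "Q \<in> carrier ((GG Mod Ks)\<lparr>carrier := pr ` DG\<rparr>)"
    then obtain f where f: "f \<in> DG" "Q = pr f" by auto
    obtain h where h: "h \<in> DG" "h [^]\<^bsub>GG\<^esub> n = f" using DG_root[OF n f(1)] by blast
    have hc: "h \<in> carrier GG" using h(1) subgroup.subset[OF DG_sub] by blast
    have "pr h [^]\<^bsub>(GG Mod Ks)\<lparr>carrier := pr ` DG\<rparr>\<^esub> n = pr h [^]\<^bsub>GG Mod Ks\<^esub> n"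
      using monoid.nat_pow_consistent[OF HH_monoid] by metis
    also have "\<dots> = pr (h [^]\<^bsub>GG\<^esub> n)" using group_hom.hom_nat_pow[OF pr_hom hc] by simp
    also have "\<dots> = Q" using h(2) f(2) by simp
    finally show "\<exists>y\<in>carrier ((GG Mod Ks)\<lparr>carrier := pr ` DG\<rparr>). y [^]\<^bsub>(GG Mod Ks)\<lparr>carrier := pr ` DG\<rparr>\<^esub> n = Q"
      using h(1) by auto
  qed
  show "bounded_grp ((GG Mod Ks)\<lparr>carrier := pr ` BG\<rparr>)"
    unfolding bounded_grp_def
  proof (intro exI conjI ballI)
    show "N > 0" by (rule Npos)
    fix Q assume "Q \<in> carrier ((GG Mod Ks)\<lparr>carrier := pr ` BG\<rparr>)"
    then obtain f where f: "f \<in> BG" "Q = pr f" by auto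
    have fc: "f \<in> carrier GG" using f(1) subgroup.subset[OF BG_sub] by blast
    have "Q [^]\<^bsub>(GG Mod Ks)\<lparr>carrier := pr ` BG\<rparr>\<^esub> N = Q [^]\<^bsub>GG Mod Ks\<^esub> N"
      using monoid.nat_pow_consistent[OF HH_monoid] by metis
    also have "\<dots> = pr (f [^]\<^bsub>GG\<^esub> N)" using group_hom.hom_nat_pow[OF pr_hom fc] f(2) by simp
    also have "\<dots> = pr \<one>\<^bsub>GG\<^esub>" using BG_bnd[OF f(1)] by simp
    also have "\<dots> = \<one>\<^bsub>GG Mod Ks\<^esub>" using group_hom.hom_one[OF pr_hom] .
    finally show "Q [^]\<^bsub>(GG Mod Ks)\<lparr>carrier := pr ` BG\<rparr>\<^esub> N = \<one>\<^bsub>(GG Mod Ks)\<lparr>carrier := pr ` BG\<rparr>\<^esub>"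
      by simp
  qed
  show "pr ` DG \<inter> pr ` BG = {\<one>\<^bsub>GG Mod Ks\<^esub>}"
  proof
    show "pr ` DG \<inter> pr ` BG \<subseteq> {\<one>\<^bsub>GG Mod Ks\<^esub>}"
    proof
      fix Q assume "Q \<in> pr ` DG \<inter> pr ` BG"
      then obtain f f' where f: "f \<in> DG" "Q = pr f" and f': "f' \<in> BG" "Q = pr f'" by blast
      have fG: "f \<in> Gc" and fD: "\<And>t x. f t x \<in> Dd" using f(1) unfolding DG_def by auto
      have f'G: "f' \<in> Gc" and f'B: "\<And>t x. f' t x \<in> Bb" using f'(1) unfolding BG_def by auto
      have "f' \<in> pr f'" by (rule group.rcos_self[OF GG_group _ K_subgroup]) (use f'G GG_simps in simp)
      then have "f' \<in> pr f" using f(2) f'(2) by simp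
      then obtain k where k: "k \<in> Ks" "f' = k \<otimes>\<^bsub>GG\<^esub> f" unfolding r_coset_def by blast
      obtain u where u: "u \<in> WL" "k = rh u" using k(1) unfolding K_set_def by blast
      have kc: "\<And>t x. k t x \<in> carrier A" using u rho_Gc Gc_carr by blast
      have e: "f' t x = k t x \<otimes> f t x" for t x using k(2) GG_simps by simp
      have "f' t x = pB (k t x)" for t x
      proof -
        have "f' t x = pB (f' t x)" using pB_B[OF f'B] by simp
        also have "\<dots> = pB (k t x) \<otimes> pB (f t x)" unfolding e by (rule pD_hom(2)[OF kc Gc_carr[OF fG]])
        also have "\<dots> = pB (k t x)" using pB_D[OF fD] p_carr(2)[OF kc] by simp
        finally show ?thesis .
      qed
      then have "f' = (\<lambda>t x. pB (rh u t x))" using u(2) by auto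
      also have "\<dots> = rh (\<lambda>y. pB (u y))"
        by (rule rho_map(2)[OF u(1), symmetric]) (use pD_hom(2) p_one(2) p_carr(2) in auto)
      finally have "f' \<in> Ks"
        unfolding K_set_def using rho_map(1)[OF u(1), of pB] pD_hom(2) p_one(2) p_carr(2) by auto
      then have "Q = Ks" using f'(2) Ks_const by simp
      then show "Q \<in> {\<one>\<^bsub>GG Mod Ks\<^esub>}" by simp
    qed
    have o: "pr \<one>\<^bsub>GG\<^esub> = \<one>\<^bsub>GG Mod Ks\<^esub>" by (rule group_hom.hom_one[OF pr_hom])
    have "\<one>\<^bsub>GG\<^esub> \<in> DG" "\<one>\<^bsub>GG\<^esub> \<in> BG" using subgroup.one_closed[OF DG_sub] subgroup.one_closed[OF BG_sub] by auto
    then show "{\<one>\<^bsub>GG Mod Ks\<^esub>} \<subseteq> pr ` DG \<inter> pr ` BG" using o by blast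
  qed
  show "pr ` DG <#>\<^bsub>GG Mod Ks\<^esub> pr ` BG = carrier (GG Mod Ks)"
  proof
    show "pr ` DG <#>\<^bsub>GG Mod Ks\<^esub> pr ` BG \<subseteq> carrier (GG Mod Ks)"
    proof
      fix Z assume "Z \<in> pr ` DG <#>\<^bsub>GG Mod Ks\<^esub> pr ` BG"
      then obtain a b where ab: "a \<in> pr ` DG" "b \<in> pr ` BG" "Z = a \<otimes>\<^bsub>GG Mod Ks\<^esub> b"
        unfolding set_mult_def by blast
      have "a \<in> carrier (GG Mod Ks)" "b \<in> carrier (GG Mod Ks)"
        using ab subgroup.subset[OF sDH] subgroup.subset[OF sBH] by blast+
      then show "Z \<in> carrier (GG Mod Ks)" using ab(3) monoid.m_closed[OF HH_monoid] by simp
    qed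
    show "carrier (GG Mod Ks) \<subseteq> pr ` DG <#>\<^bsub>GG Mod Ks\<^esub> pr ` BG"
    proof
      fix Z assume "Z \<in> carrier (GG Mod Ks)"
      then obtain f where f: "f \<in> carrier GG" "Z = pr f" unfolding carrier_FactGroup by blast
      have "f \<in> DG <#>\<^bsub>GG\<^esub> BG" by (rule GG_decomp[OF f(1)])
      then obtain a b where ab: "a \<in> DG" "b \<in> BG" "f = a \<otimes>\<^bsub>GG\<^esub> b" unfolding set_mult_def by blast
      have abc: "a \<in> carrier GG" "b \<in> carrier GG"
        using ab subgroup.subset[OF DG_sub] subgroup.subset[OF BG_sub] by blast+
      have "Z = pr a \<otimes>\<^bsub>GG Mod Ks\<^esub> pr b" using f(2) ab(3) group_hom.hom_mult[OF pr_hom abc] by simp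
      then show "Z \<in> pr ` DG <#>\<^bsub>GG Mod Ks\<^esub> pr ` BG" using ab(1,2) unfolding set_mult_def by blast
    qed
  qed
qed

end


theorem mainTheorem14:
  fixes D :: "'t::order \<Rightarrow> 'x set" and bp :: "'t \<Rightarrow> 'x" and F :: "'t \<Rightarrow> 't \<Rightarrow> 'x \<Rightarrow> 'x"
    and A :: "('a, 'c) monoid_scheme"
  assumes "countable (UNIV :: 't set)"
    and "directed_poset TYPE('t)"
    and "pointed_diagram D bp F"
    and "mittag_leffler D F"
    and "comm_group A"
  shows "(\<forall>p::nat. Factorial_Ring.prime p \<and> n_divisible A p \<longrightarrow>
            n_divisible (G_grp D bp F A) p \<and> n_divisible (H_grp D bp F A) p)
       \<and> (divisible_grp A \<longrightarrow>
            divisible_grp (G_grp D bp F A) \<and> divisible_grp (H_grp D bp F A))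
       \<and> (almost_divisible A \<longrightarrow>
            almost_divisible (G_grp D bp F A) \<and> almost_divisible (H_grp D bp F A))"
proof -
  interpret fs: fsetting A D bp F
    by (intro fsetting.intro setting.intro setting_axioms.intro fsetting_axioms.intro assms)
  have nd: "n_divisible A n \<Longrightarrow> n_divisible (G_grp D bp F A) n \<and> n_divisible (H_grp D bp F A) n" for n
    using fs.GG_ndiv fs.HH_ndiv by blast
  have P1: "\<forall>p::nat. Factorial_Ring.prime p \<and> n_divisible A p \<longrightarrow>
            n_divisible (G_grp D bp F A) p \<and> n_divisible (H_grp D bp F A) p"
    using nd by blast
  have P2: "divisible_grp A \<longrightarrow> divisible_grp (G_grp D bp F A) \<and> divisible_grp (H_grp D bp F A)"
    unfolding divisible_grp_def using nd by blast
  have P3: "almost_divisible (G_grp D bp F A) \<and> almost_divisible (H_grp D bp F A)"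
    if ad: "almost_divisible A"
  proof -
    obtain Dd Bb where sD: "subgroup Dd A" and sB: "subgroup Bb A"
      and dv: "divisible_grp (A\<lparr>carrier := Dd\<rparr>)" and bd: "bounded_grp (A\<lparr>carrier := Bb\<rparr>)"
      and i: "Dd \<inter> Bb = {\<one>\<^bsub>A\<^esub>}" and s: "Dd <#>\<^bsub>A\<^esub> Bb = carrier A"
      using ad unfolding almost_divisible_def by blast
    have mA: "monoid A" using assms(5) comm_group.axioms(2) group.is_monoid by blast
    have divD: "\<forall>x\<in>Dd. \<exists>y\<in>Dd. y [^]\<^bsub>A\<^esub> n = x" if "n > 0" for n :: nat
      using dv that monoid.nat_pow_consistent[OF mA]
      unfolding divisible_grp_def n_divisible_def by simp
    obtain N :: nat where N: "N > 0" "\<forall>x\<in>Bb. x [^]\<^bsub>A\<^esub> N = \<one>\<^bsub>A\<^esub>"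
      using bd monoid.nat_pow_consistent[OF mA] unfolding bounded_grp_def by auto
    have bB: "\<And>x. x \<in> Bb \<Longrightarrow> x [^]\<^bsub>A\<^esub> N = \<one>\<^bsub>A\<^esub>" using N(2) by blast
    interpret fd: fsd A D bp F Dd Bb N
      by (intro fsd.intro fs.fsetting_axioms dsum.intro dsum_axioms.intro fsd_axioms.intro assms(5) sD sB i s divD N(1) bB)
    show ?thesis using fd.GG_almost fd.HH_almost by blast
  qed
  show ?thesis using P1 P2 P3 by blast
qed

end
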